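(* Let $U$ be the $\mathrm{mcG}(q)$ solution of $\dot u=f(u,t)$, $u(0)=u_0$, with residual $R_i(U,t)=\dot U_i(t)-f_i(U(t),t)$, and let $\tilde R$ be the local $L^2$-projection of $R$ onto the trial space, i.e. $\tilde R_i(U,\cdot)|_{I_{ij}}$ is the $L^2(I_{ij})$-orthogonal projection of $R_i(U,\cdot)|_{I_{ij}}$ onto the polynomials of degree $\le q_{ij}$ on $I_{ij}$, for $j=1,\dots,M_i$, $i=1,\dots,N$. Then every $\tilde R_i(U,\cdot)|_{I_{ij}}$ is a (possibly zero) scalar multiple of the Legendre polynomial of degree $q_{ij}$ on $I_{ij}$, i.e. of $t\mapsto P_{q_{ij}}\big(2(t-t_{i,j-1})/k_{ij}-1\big)$.
   Context: $f:\mathbb{R}^N\times(0,T]\to\mathbb{R}^N$ is bounded and Lipschitz in $u$. For each component $i$: partition $0=t_{i0}<\dots<t_{iM_i}=T$, $I_{ij}=(t_{i,j-1},t_{ij}]$, $k_{ij}=t_{ij}-t_{i,j-1}$, degrees $q_{ij}\ge1$. The $\mathrm{mcG}(q)$ solution $U$: each $U_i$ continuous on $[0,T]$, $U_i|_{I_{ij}}$ a polynomial of degree $\le q_{ij}$, $U(0)=u_0$, and $\int_{I_{ij}}\dot U_iv\,dt=\int_{I_{ij}}f_i(U,t)v\,dt$ for all polynomials $v$ of degree $\le q_{ij}-1$ on $I_{ij}$ (exact integration). $P_q$ is the degree-$q$ Legendre polynomial on $[-1,1]$. *)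

theory Defs
  imports "HOL-Analysis.Analysis" "HOL-Computational_Algebra.Polynomial"
begin

definition legendre_poly :: "nat \<Rightarrow> real poly" where
  "legendre_poly n = smult (1 / (2 ^ n * fact n)) ((pderiv ^^ n) ([:-1, 0, 1:] ^ n))"

definition is_L2_poly_proj :: "real \<Rightarrow> real \<Rightarrow> nat \<Rightarrow> (real \<Rightarrow> real) \<Rightarrow> real poly \<Rightarrow> bool" where
  "is_L2_poly_proj a b n g r \<longleftrightarrow> degree r \<le> n \<and>
     (\<forall>v::real poly. degree v \<le> n \<longrightarrow>
        integral {a..b} (\<lambda>s. (g s - poly r s) * poly v s) = 0)"

end

theory Submission imports Defs begin

definition PI :: "real \<Rightarrow> real \<Rightarrow> real poly \<Rightarrow> real" where
  "PI a b p = integral {a..b} (poly p)"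

lemma poly_integrable: "poly (p::real poly) integrable_on {a..b}"
proof -
  have "continuous_on {a..b} (\<lambda>x. poly p (id x))" by (intro continuous_on_poly) (simp add: continuous_on_id id_def)
  then show ?thesis by (simp add: integrable_continuous_interval)
qed

lemma PI_add: "PI a b (p + q) = PI a b p + PI a b q"
proof -
  have "poly (p + q) = (\<lambda>x. poly p x + poly q x)" by auto
  then show ?thesis unfolding PI_def using integral_add[OF poly_integrable poly_integrable] by simp
qed

lemma PI_diff: "PI a b (p - q) = PI a b p - PI a b q"
proof -
  have "poly (p - q) = (\<lambda>x. poly p x - poly q x)" by auto
  then show ?thesis unfolding PI_def using integral_diff[OF poly_integrable poly_integrable] by simp
qed

lemma PI_smult: "PI a b (smult c p) = c * PI a b p"
proof -
  have "poly (smult c p) = (\<lambda>x. c * poly p x)" by auto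
  then show ?thesis unfolding PI_def by simp
qed

lemma PI_zero: "PI a b 0 = 0"
proof -
  have "poly 0 = (\<lambda>x. 0::real)" by auto
  then show ?thesis unfolding PI_def by simp
qed

lemma PI_pderiv:
  assumes "a \<le> b" shows "PI a b (pderiv p) = poly p b - poly p a"
proof -
  have d: "((\<lambda>x. poly p x) has_vector_derivative poly (pderiv p) x) (at x within {a..b})" for x
    unfolding has_real_derivative_iff_has_vector_derivative[symmetric]
    by (rule has_field_derivative_at_within) (rule poly_DERIV)
  have "((\<lambda>x. poly (pderiv p) x) has_integral (poly p b - poly p a)) {a..b}"
    by (rule fundamental_theorem_of_calculus[OF assms d])
  then show ?thesis unfolding PI_def by (rule integral_unique)
qed

lemma pcompose_power': "pcompose (p ^ n) r = (pcompose p r) ^ n"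
  by (induction n) (auto simp: pcompose_mult pcompose_1)

lemma pderiv_funpow_factor:
  fixes z :: "real poly"
  shows "m \<le> k \<Longrightarrow> \<exists>s. (pderiv ^^ m) (z ^ k) = z ^ (k - m) * s"
proof (induction m)
  case 0 then show ?case by (intro exI[of _ 1]) simp
next
  case (Suc m)
  then obtain s where s: "(pderiv ^^ m) (z ^ k) = z ^ (k - m) * s" by auto
  obtain j where j: "k - m = Suc j" and j2: "k - Suc m = j" using Suc.prems by (metis Suc_diff_le Suc_le_eq diff_Suc_Suc le_imp_less_Suc less_imp_le_nat) 
  have "(pderiv ^^ Suc m) (z ^ k) = pderiv (z ^ Suc j * s)" using s j by simp
  also have "\<dots> = z ^ Suc j * pderiv s + s * pderiv (z ^ Suc j)" by (rule pderiv_mult)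
  also have "pderiv (z ^ Suc j) = smult (of_nat (Suc j)) (z ^ j) * pderiv z" by (rule pderiv_power_Suc)
  also have "z ^ Suc j * pderiv s + s * (smult (of_nat (Suc j)) (z ^ j) * pderiv z) = z ^ j * (z * pderiv s + smult (of_nat (Suc j)) (s * pderiv z))"
    by (simp add: algebra_simps)
  finally show ?case using j2 by blast
qed

lemma pderiv_funpow_orth:
  fixes z :: "real poly"
  assumes za: "poly z a = 0" and zb: "poly z b = 0" and ab: "a \<le> b"
  shows "m \<le> k \<Longrightarrow> degree v < m \<Longrightarrow> PI a b ((pderiv ^^ m) (z ^ k) * v) = 0"
proof (induction m arbitrary: v)
  case 0 then show ?case by simp
next
  case (Suc m)
  define W where "W = (pderiv ^^ m) (z ^ k)"
  obtain s where s: "W = z ^ (k - m) * s" using pderiv_funpow_factor[of m k z] Suc.prems unfolding W_def by auto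
  have km: "k - m \<noteq> 0" using Suc.prems by simp
  have Wa: "poly W a = 0" "poly W b = 0" using s za zb km by auto
  have "PI a b (W * pderiv v) = 0"
  proof (cases "pderiv v = 0")
    case True then show ?thesis by (simp add: PI_zero)
  next
    case False
    then have "degree (pderiv v) < m" using Suc.prems by (simp add: degree_pderiv pderiv_eq_0_iff)
    then show ?thesis using Suc.IH Suc.prems unfolding W_def by simp
  qed
  moreover have "pderiv W * v = pderiv (W * v) - W * pderiv v" by (simp add: pderiv_mult algebra_simps)
  ultimately have "PI a b (pderiv W * v) = 0"
    by (simp add: PI_diff PI_pderiv[OF ab] Wa)
  then show ?case unfolding W_def by simp
qed

lemma pderiv_funpow_pcompose:
  fixes p :: "real poly"
  shows "(pderiv ^^ m) (pcompose p [:d, c:]) = smult (c ^ m) (pcompose ((pderiv ^^ m) p) [:d, c:])"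
  by (induction m) (simp_all add: pderiv_pcompose pderiv_smult pderiv_pCons mult.commute)

lemma degree_pderiv_funpow:
  fixes p :: "real poly"
  shows "degree ((pderiv ^^ m) p) = degree p - m"
  by (induction m) (simp_all add: degree_pderiv)


lemma legendre_unique:
  assumes ab: "a < b" and n: "n \<ge> 1" and dQ: "degree Q \<le> n"
    and orth: "\<And>v. degree v \<le> n - 1 \<Longrightarrow> PI a b (Q * v) = 0"
  shows "\<exists>c. \<forall>s. poly Q s = c * poly (legendre_poly n) (2 * (s - a) / (b - a) - 1)"
proof -
  define cc where "cc = 2 / (b - a)"
  define dd where "dd = -1 - 2 * a / (b - a)"
  define r where "r = [:dd, cc:]"
  have cc0: "cc \<noteq> 0" using ab by (simp add: cc_def)
  have pr: "poly r s = 2 * (s - a) / (b - a) - 1" for s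
  proof -
    have ba: "b - a \<noteq> 0" using ab by simp
    have "2 * (s - a) / (b - a) = s * (2 / (b - a)) - 2 * a / (b - a)"
      by (simp add: diff_divide_distrib right_diff_distrib)
    then show ?thesis unfolding r_def cc_def dd_def by simp
  qed
  define W :: "real poly" where "W = [:-1, 0, 1:] ^ n"
  define z where "z = pcompose [:-1, 0, 1:] r"
  have Wr: "pcompose W r = z ^ n" unfolding W_def z_def by (rule pcompose_power')
  define K :: real where "K = 1 / (2 ^ n * fact n)"
  have K0: "K \<noteq> 0" by (simp add: K_def)
  define L where "L = pcompose (legendre_poly n) r"
  have "(pderiv ^^ n) (z ^ n) = smult (cc ^ n) (pcompose ((pderiv ^^ n) W) r)"
    unfolding Wr[symmetric] r_def by (rule pderiv_funpow_pcompose)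
  then have "pcompose ((pderiv ^^ n) W) r = smult (1 / cc ^ n) ((pderiv ^^ n) (z ^ n))"
    using cc0 by simp
  then have L_eq: "L = smult (K / cc ^ n) ((pderiv ^^ n) (z ^ n))"
    unfolding L_def legendre_poly_def K_def W_def by (simp add: pcompose_smult)
  have za: "poly z a = 0" and zb: "poly z b = 0"
  proof -
    have "poly r a = -1" by (simp add: pr)
    moreover have "poly r b = 1"
    proof -
      have "2 * (b - a) / (b - a) = 2" using ab by (simp add: divide_eq_eq)
      then show ?thesis by (simp only: pr)
    qed
    ultimately show "poly z a = 0" "poly z b = 0" by (simp_all add: z_def poly_pcompose)
  qed
  have orthL: "PI a b (L * v) = 0" if "degree v < n" for v
  proof -
    have "L * v = smult (K / cc ^ n) ((pderiv ^^ n) (z ^ n) * v)" by (simp add: L_eq)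
    then show ?thesis using pderiv_funpow_orth[OF za zb _ order.refl that] ab
      by (simp add: PI_smult)
  qed
  have degW: "degree W = 2 * n" unfolding W_def by (subst degree_power_eq) auto
  have degL: "degree L = n"
    unfolding L_def legendre_poly_def
    by (simp add: degree_pcompose r_def cc0 degree_pderiv_funpow W_def[symmetric] degW)
  then have "L \<noteq> 0" using n by auto
  then have L0: "coeff L n \<noteq> 0" using degL by (metis leading_coeff_0_iff)
  define c where "c = coeff Q n / coeff L n"
  define D where "D = Q - smult c L"
  have cD: "coeff D n = 0" using L0 by (simp add: D_def c_def)
  have dD: "degree D \<le> n - 1"
  proof (rule degree_le, intro allI impI)
    fix i assume "n - 1 < i"
    then have "i = n \<or> i > n" using n by linarith
    then show "coeff D i = 0"
    proof
      assume "i > n"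
      then have "coeff Q i = 0" "coeff L i = 0" using dQ degL by (auto intro: coeff_eq_0)
      then show ?thesis by (simp add: D_def)
    qed (use cD in simp)
  qed
  have "(Q - smult c L) * D = Q * D - smult c (L * D)"
    by (simp add: left_diff_distrib)
  then have "D * D = Q * D - smult c (L * D)" by (simp only: D_def)
  then have "PI a b (D * D) = PI a b (Q * D) - c * PI a b (L * D)"
    by (simp add: PI_diff PI_smult)
  also have "\<dots> = 0" using orth[OF dD] orthL dD n by simp
  finally have "integral (cbox a b) (\<lambda>x. poly D x * poly D x) = 0"
  proof -
    assume "PI a b (D * D) = 0"
    moreover have "poly (D * D) = (\<lambda>x. poly D x * poly D x)" by auto
    ultimately show ?thesis unfolding PI_def by simp
  qed
  moreover have "continuous_on (cbox a b) (\<lambda>x. poly D x * poly D x)"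
    by (intro continuous_intros)
  ultimately have "\<forall>x\<in>cbox a b. poly D x * poly D x = 0"
    using ab by (subst (asm) integral_cbox_eq_0_iff) auto
  then have "{a..b} \<subseteq> {x. poly D x = 0}" by auto
  then have "D = 0" using poly_roots_finite[of D] infinite_Icc[OF ab] finite_subset by blast
  then have "Q = smult c L" by (simp add: D_def)
  then show ?thesis by (auto simp: L_def poly_pcompose pr)
qed


theorem lemma6p8:
  fixes f :: "real ^ 'n \<Rightarrow> real \<Rightarrow> real ^ 'n"
    and U :: "real \<Rightarrow> real ^ 'n"
    and u0 :: "real ^ 'n"
    and T :: real
    and M :: "'n \<Rightarrow> nat"
    and tp :: "'n \<Rightarrow> nat \<Rightarrow> real"
    and q :: "'n \<Rightarrow> nat \<Rightarrow> nat"
  assumes T_pos: "T > 0"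
    and f_bounded: "\<exists>B. \<forall>u t. t \<in> {0<..T} \<longrightarrow> norm (f u t) \<le> B"
    and f_lipschitz: "\<exists>L. \<forall>u w t. t \<in> {0<..T} \<longrightarrow> norm (f u t - f w t) \<le> L * norm (u - w)"
    and M_pos: "\<And>i. M i \<ge> 1"
    and tp_start: "\<And>i. tp i 0 = 0"
    and tp_end: "\<And>i. tp i (M i) = T"
    and tp_incr: "\<And>i j. 1 \<le> j \<Longrightarrow> j \<le> M i \<Longrightarrow> tp i (j - 1) < tp i j"
    and q_pos: "\<And>i j. 1 \<le> j \<Longrightarrow> j \<le> M i \<Longrightarrow> q i j \<ge> 1"
    and U_cont: "\<And>i. continuous_on {0..T} (\<lambda>s. U s $ i)"
    and U_init: "U 0 = u0"
    and U_piecewise_poly: "\<And>i j. 1 \<le> j \<Longrightarrow> j \<le> M i \<Longrightarrow>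
          \<exists>p::real poly. degree p \<le> q i j \<and>
             (\<forall>s \<in> {tp i (j - 1)<..tp i j}. U s $ i = poly p s)"
    and f_integrable: "\<And>i j. 1 \<le> j \<Longrightarrow> j \<le> M i \<Longrightarrow>
          (\<lambda>s. f (U s) s $ i) integrable_on {tp i (j - 1)..tp i j}"
    and galerkin: "\<And>i j v. 1 \<le> j \<Longrightarrow> j \<le> M i \<Longrightarrow> degree v \<le> q i j - 1 \<Longrightarrow>
          integral {tp i (j - 1)..tp i j} (\<lambda>s. deriv (\<lambda>r. U r $ i) s * poly v s)
          = integral {tp i (j - 1)..tp i j} (\<lambda>s. f (U s) s $ i * poly v s)"
  shows "\<forall>i j. 1 \<le> j \<and> j \<le> M i \<longrightarrow>
           (\<forall>Rt. is_L2_poly_proj (tp i (j - 1)) (tp i j) (q i j)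
                   (\<lambda>s. deriv (\<lambda>r. U r $ i) s - f (U s) s $ i) Rt \<longrightarrow>
              (\<exists>c::real. \<forall>s. poly Rt s =
                 c * poly (legendre_poly (q i j))
                       (2 * (s - tp i (j - 1)) / (tp i j - tp i (j - 1)) - 1)))"

proof (intro allI impI)
  fix i j Rt
  assume j: "1 \<le> j \<and> j \<le> M i"
    and proj: "is_L2_poly_proj (tp i (j - 1)) (tp i j) (q i j)
                   (\<lambda>s. deriv (\<lambda>r. U r $ i) s - f (U s) s $ i) Rt"
  define a where "a = tp i (j - 1)"
  define b where "b = tp i j"
  have mono: "tp i k \<le> tp i l" if "k \<le> l" "l \<le> M i" for k l
    using that
  proof (induction l)
    case 0 then show ?case by simp
  next
    case (Suc l)
    show ?case
    proof (cases "k = Suc l")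
      case True then show ?thesis by simp
    next
      case False
      then have "tp i k \<le> tp i l" using Suc by simp
      moreover have "tp i l < tp i (Suc l)" using tp_incr[of "Suc l" i] Suc.prems by simp
      ultimately show ?thesis by simp
    qed
  qed
  have ab: "a < b" unfolding a_def b_def using tp_incr j by auto
  have a0: "0 \<le> a" unfolding a_def using mono[of 0 "j - 1"] j tp_start[of i] by (metis diff_le_self le0 order.trans)
  have bT: "b \<le> T" unfolding b_def using mono[of j "M i"] j tp_end by simp
  have qpos: "q i j \<ge> 1" using q_pos j by auto
  obtain p where dp: "degree p \<le> q i j" and pU: "\<forall>s\<in>{a<..b}. U s $ i = poly p s"
    using U_piecewise_poly[of j i] j unfolding a_def b_def by auto
  have dU: "deriv (\<lambda>r. U r $ i) s = poly (pderiv p) s" if s: "s \<in> {a<..<b}" for s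
  proof -
    have "((\<lambda>r. U r $ i) has_field_derivative poly (pderiv p) s) (at s)"
      by (rule has_field_derivative_transform_within_open[OF poly_DERIV, where S = "{a<..<b}"])
         (use s pU in auto)
    then show ?thesis by (rule DERIV_imp_deriv)
  qed
  define F where "F s = f (U s) s $ i" for s
  obtain B where B: "\<And>u t. t \<in> {0<..T} \<Longrightarrow> norm (f u t) \<le> B" using f_bounded by auto
  have Fint: "F integrable_on {a..b}"
    using f_integrable[of j i] j unfolding F_def a_def b_def by auto
  have Fabs: "F absolutely_integrable_on {a..b}"
  proof (rule measurable_bounded_by_integrable_imp_absolutely_integrable)
    show "F \<in> borel_measurable (lebesgue_on {a..b})" by (rule integrable_imp_measurable[OF Fint])
    show "{a..b} \<in> sets lebesgue" by simp
    show "(\<lambda>x. if x = a then norm (F a) else B) integrable_on {a..b}"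
      by (rule integrable_spike_finite[where S = "{a}" and f = "\<lambda>x. B"]) auto
    show "norm (F x) \<le> (if x = a then norm (F a) else B)" if x: "x \<in> {a..b}" for x
    proof (cases "x = a")
      case False
      then have "x \<in> {0<..T}" using x a0 bT by auto
      then have "norm (f (U x) x) \<le> B" by (rule B)
      moreover have "norm (F x) \<le> norm (f (U x) x)"
        unfolding F_def using component_le_norm_cart by simp
      ultimately show ?thesis using False by simp
    qed simp
  qed
  have Rorth: "PI a b (Rt * v) = 0" if dv: "degree v \<le> q i j - 1" for v
  proof -
    have dv': "degree v \<le> q i j" using dv by simp
    have e0: "integral {a..b} (\<lambda>s. (deriv (\<lambda>r. U r $ i) s - F s - poly Rt s) * poly v s) = 0"
      using proj dv' unfolding is_L2_poly_proj_def a_def b_def F_def by auto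
    define G where "G s = deriv (\<lambda>r. U r $ i) s * poly v s" for s
    define Fv where "Fv s = F s * poly v s" for s
    have Geq: "G s = poly (pderiv p * v) s" if "s \<in> {a..b} - {a, b}" for s
      using dU[of s] that unfolding G_def by auto
    have Gint: "G integrable_on {a..b}"
      by (rule integrable_spike_finite[where S = "{a,b}", OF _ Geq poly_integrable]) auto
    have GI: "integral {a..b} G = PI a b (pderiv p * v)"
      unfolding PI_def by (rule integral_spike[of "{a,b}"]) (use Geq in auto)
    have "(\<lambda>x. poly v x * F x) absolutely_integrable_on {a..b}"
    proof (rule absolutely_integrable_bounded_measurable_product_real[OF _ _ _ Fabs])
      have c: "continuous_on {a..b} (poly v)"
        using continuous_on_poly[of "{a..b}" "\<lambda>x. x" v] by (simp add: continuous_on_id)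
      show "poly v \<in> borel_measurable (lebesgue_on {a..b})"
        by (rule continuous_imp_measurable_on_sets_lebesgue[OF c]) simp
      show "{a..b} \<in> sets lebesgue" by simp
      show "bounded (poly v ` {a..b})"
        by (rule compact_imp_bounded, rule compact_continuous_image[OF c]) simp
    qed
    then have "(\<lambda>x. poly v x * F x) integrable_on {a..b}"
      by (simp add: absolutely_integrable_on_def)
    then have Fvint: "Fv integrable_on {a..b}" unfolding Fv_def by (simp add: mult.commute)
    have Rint: "(\<lambda>s. poly (Rt * v) s) integrable_on {a..b}" by (rule poly_integrable)
    have "(\<lambda>s. (deriv (\<lambda>r. U r $ i) s - F s - poly Rt s) * poly v s)
          = (\<lambda>s. G s - Fv s - poly (Rt * v) s)"
      by (auto simp: G_def Fv_def algebra_simps)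
    with e0 have "integral {a..b} (\<lambda>s. G s - Fv s - poly (Rt * v) s) = 0" by simp
    then have "integral {a..b} G - integral {a..b} Fv - integral {a..b} (\<lambda>s. poly (Rt * v) s) = 0"
      using Gint Fvint Rint by (simp add: integral_diff integrable_diff)
    moreover have "integral {a..b} G = integral {a..b} Fv"
      using galerkin[of j i v] j dv unfolding G_def Fv_def F_def a_def b_def by auto
    moreover have "poly (Rt * v) = (\<lambda>s. poly Rt s * poly v s)" by auto
    ultimately show ?thesis unfolding PI_def by simp
  qed
  have dRt: "degree Rt \<le> q i j" using proj unfolding is_L2_poly_proj_def by simp
  from legendre_unique[OF ab qpos dRt Rorth]
  show "\<exists>c::real. \<forall>s. poly Rt s =
                 c * poly (legendre_poly (q i j))
                       (2 * (s - tp i (j - 1)) / (tp i j - tp i (j - 1)) - 1)"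
    unfolding a_def b_def by simp
qed

end
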